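(* For every integer $n\ge1$ and every $u\in V$, the normalizing factor satisfies $Z_u\ge \dfrac{1}{6\ln(2en)}$.
   Context: For an integer $n\ge1$, the $n$-octahedral graph $G'_n=(V,E')$ is the undirected graph with vertex set $V=\{u\in\mathbb{Z}^3:|u_1|+|u_2|+|u_3|=n\}$ and edge set $E'=\{\{v,w\}\subset V: v\neq w,\ |v_i-w_i|\le 1 \text{ for all } i=1,2,3\}$. For $u,v\in V$, $d_{uv}$ denotes the shortest-path (number of edges) distance between $u$ and $v$ in $G'_n$. For $u\in V$, $Z_u=\left(\sum_{w\in V\setminus\{u\}} d_{uw}^{-2}\right)^{-1}$. *)

theory Defs
  imports Complex_Main
begin

type_synonym pt = "int \<times> int \<times> int"

definition oct_V :: "nat \<Rightarrow> pt set" where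
  "oct_V n = {(a, b, c). \<bar>a\<bar> + \<bar>b\<bar> + \<bar>c\<bar> = int n}"

definition oct_E :: "nat \<Rightarrow> (pt \<times> pt) set" where
  "oct_E n = {((a1, b1, c1), (a2, b2, c2)).
      (a1, b1, c1) \<in> oct_V n \<and> (a2, b2, c2) \<in> oct_V n \<and>
      (a1, b1, c1) \<noteq> (a2, b2, c2) \<and>
      \<bar>a1 - a2\<bar> \<le> 1 \<and> \<bar>b1 - b2\<bar> \<le> 1 \<and> \<bar>c1 - c2\<bar> \<le> 1}"

definition oct_dist :: "nat \<Rightarrow> pt \<Rightarrow> pt \<Rightarrow> nat" where
  "oct_dist n u v = (LEAST k. (u, v) \<in> (oct_E n) ^^ k)"

definition oct_Z :: "nat \<Rightarrow> pt \<Rightarrow> real" where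
  "oct_Z n u = inverse (\<Sum>w \<in> oct_V n - {u}. 1 / (real (oct_dist n u w))\<^sup>2)"

end

theory Submission
  imports Defs "HOL-Analysis.Harmonic_Numbers"
begin

fun l1 :: "pt \<Rightarrow> pt \<Rightarrow> int" where
  "l1 (a,b,c) (x,y,z) = \<bar>a-x\<bar> + \<bar>b-y\<bar> + \<bar>c-z\<bar>"

lemma l1_tri: "l1 u w \<le> l1 u v + l1 v w"
  by (cases u; cases v; cases w) auto

lemma l1_sym: "l1 u w = l1 w u"
  by (cases u; cases w) auto

lemma l1_zero: "l1 u w = 0 \<longleftrightarrow> u = w"
  by (cases u; cases w) auto

lemma edge_l1:
  assumes "(v, w) \<in> oct_E n"
  shows "l1 v w \<le> 2"
proof -
  obtain a1 b1 c1 a2 b2 c2 where vw: "v = (a1,b1,c1)" "w = (a2,b2,c2)"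
    by (cases v; cases w) auto
  from assms have h: "\<bar>a1\<bar> + \<bar>b1\<bar> + \<bar>c1\<bar> = int n" "\<bar>a2\<bar> + \<bar>b2\<bar> + \<bar>c2\<bar> = int n"
    "\<bar>a1 - a2\<bar> \<le> 1" "\<bar>b1 - b2\<bar> \<le> 1" "\<bar>c1 - c2\<bar> \<le> 1"
    unfolding oct_E_def oct_V_def vw by auto
  have p: "even (\<bar>a1\<bar> + \<bar>b1\<bar> + \<bar>c1\<bar> - (\<bar>a2\<bar> + \<bar>b2\<bar> + \<bar>c2\<bar>))" using h by simp
  have e1: "even (\<bar>x\<bar> - x)" for x :: int by (cases "x \<ge> 0") auto
  have "even ((a1 - a2) + (b1 - b2) + (c1 - c2))"
  proof -
    have "(a1 - a2) + (b1 - b2) + (c1 - c2) = (\<bar>a1\<bar> + \<bar>b1\<bar> + \<bar>c1\<bar> - (\<bar>a2\<bar> + \<bar>b2\<bar> + \<bar>c2\<bar>))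
       - (\<bar>a1\<bar> - a1) - (\<bar>b1\<bar> - b1) - (\<bar>c1\<bar> - c1) + (\<bar>a2\<bar> - a2) + (\<bar>b2\<bar> - b2) + (\<bar>c2\<bar> - c2)"
      by simp
    then show ?thesis using p e1 by (metis even_add even_diff)
  qed
  moreover have "\<bar>x\<bar> \<le> 1 \<Longrightarrow> x = -1 \<or> x = 0 \<or> x = 1" for x :: int by auto
  ultimately have "(a1-a2 = -1 \<or> a1-a2 = 0 \<or> a1-a2 = 1) \<and> (b1-b2 = -1 \<or> b1-b2 = 0 \<or> b1-b2 = 1)
     \<and> (c1-c2 = -1 \<or> c1-c2 = 0 \<or> c1-c2 = 1) \<and> even ((a1 - a2) + (b1 - b2) + (c1 - c2))"
    using h(3-5) by blast
  then have "\<bar>a1-a2\<bar> + \<bar>b1-b2\<bar> + \<bar>c1-c2\<bar> \<le> 2"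
    by (elim conjE disjE) (simp_all only:, simp_all)
  then show ?thesis unfolding vw by simp
qed

lemma path_l1:
  "(v, w) \<in> (oct_E n) ^^ k \<Longrightarrow> l1 v w \<le> 2 * int k"
proof (induction k arbitrary: w)
  case 0
  then show ?case using l1_zero[of v v] by simp
next
  case (Suc k)
  then obtain y where "(v,y) \<in> (oct_E n)^^k" "(y,w) \<in> oct_E n" by auto
  then have "l1 v y \<le> 2 * int k" "l1 y w \<le> 2" using Suc edge_l1 by auto
  then show ?case using l1_tri[of v w y] by simp
qed

lemma oct_E_sym: "(v,w) \<in> oct_E n \<Longrightarrow> (w,v) \<in> oct_E n"
  unfolding oct_E_def by (cases v; cases w) (auto simp: abs_minus_commute)

lemma relpow_sym:
  "(v,w) \<in> (oct_E n)^^k \<Longrightarrow> (w,v) \<in> (oct_E n)^^k"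
proof (induction k arbitrary: w)
  case 0 then show ?case by simp
next
  case (Suc k)
  then obtain y where y: "(v,y) \<in> (oct_E n)^^k" "(y,w) \<in> oct_E n" by auto
  have "(y,v) \<in> (oct_E n)^^k" using Suc.IH y(1) by simp
  moreover have "(w,y) \<in> oct_E n" using oct_E_sym y(2) by simp
  ultimately show ?case by (rule relpow_Suc_I2[rotated])
qed

lemma conn_aux:
  "\<forall>x y z. (x,y,z) \<in> oct_V n \<longrightarrow> nat (int n - x) = m \<longrightarrow> (\<exists>k. ((x,y,z), (int n, 0, 0)) \<in> (oct_E n)^^k)"
proof (induction m)
  case 0
  show ?case
  proof (intro allI impI)
    fix x y z assume h: "(x,y,z) \<in> oct_V n" "nat (int n - x) = 0"
    then have "x \<ge> int n" by simp
    with h(1) have "x = int n" "y = 0" "z = 0" unfolding oct_V_def by auto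
    then show "\<exists>k. ((x,y,z), (int n, 0, 0)) \<in> (oct_E n)^^k" by (intro exI[of _ 0]) simp
  qed
next
  case (Suc m)
  show ?case
  proof (intro allI impI)
    fix x y z assume h: "(x,y,z) \<in> oct_V n" "nat (int n - x) = Suc m"
    then have xn: "x < int n" and hv: "\<bar>x\<bar> + \<bar>y\<bar> + \<bar>z\<bar> = int n" unfolding oct_V_def by auto
    obtain v where v: "v \<in> oct_V n" "((x,y,z), v) \<in> oct_E n" "fst v = x + 1"
    proof (cases "x \<ge> 0")
      case True
      show ?thesis
      proof (cases "y = 0")
        case False
        define v where "v = (x+1, y - sgn y, z)"
        have "v \<in> oct_V n" using True False hv unfolding v_def oct_V_def
          by (cases "y > 0") auto
        moreover have "((x,y,z), v) \<in> oct_E n" using \<open>v \<in> oct_V n\<close> h(1) False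
          unfolding v_def oct_E_def by (cases "y > 0") auto
        ultimately show ?thesis using that unfolding v_def by auto
      next
        case yz: True
        then have "z \<noteq> 0" using True xn hv by auto
        define v where "v = (x+1, y, z - sgn z)"
        have "v \<in> oct_V n" using True yz \<open>z \<noteq> 0\<close> hv unfolding v_def oct_V_def
          by (cases "z > 0") auto
        moreover have "((x,y,z), v) \<in> oct_E n" using \<open>v \<in> oct_V n\<close> h(1) \<open>z \<noteq> 0\<close>
          unfolding v_def oct_E_def by (cases "z > 0") auto
        ultimately show ?thesis using that unfolding v_def by auto
      qed
    next
      case False
      define v where "v = (x+1, (if y \<ge> 0 then y + 1 else y - 1), z)"
      have "v \<in> oct_V n" using False hv unfolding v_def oct_V_def by auto
      moreover have "((x,y,z), v) \<in> oct_E n" using \<open>v \<in> oct_V n\<close> h(1)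
        unfolding v_def oct_E_def by auto
      ultimately show ?thesis using that unfolding v_def by auto
    qed
    obtain x' y' z' where vv: "v = (x',y',z')" by (cases v) auto
    have "nat (int n - x') = m" using h(2) v(3) vv by simp
    then obtain k where "((x',y',z'), (int n, 0, 0)) \<in> (oct_E n)^^k"
      using Suc.IH v(1) vv by blast
    then have "((x,y,z), (int n, 0, 0)) \<in> (oct_E n)^^(Suc k)"
      using v(2) vv by (intro relpow_Suc_I2) auto
    then show "\<exists>k. ((x,y,z), (int n, 0, 0)) \<in> (oct_E n)^^k" by blast
  qed
qed

lemma connected:
  assumes "u \<in> oct_V n" "w \<in> oct_V n"
  shows "\<exists>k. (u, w) \<in> (oct_E n)^^k"
proof -
  obtain k1 where k1: "(u, (int n, 0, 0)) \<in> (oct_E n)^^k1"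
    using conn_aux assms(1) by (cases u) blast
  obtain k2 where k2: "(w, (int n, 0, 0)) \<in> (oct_E n)^^k2"
    using conn_aux assms(2) by (cases w) blast
  have "((int n, 0, 0), w) \<in> (oct_E n)^^k2" using relpow_sym[OF k2] .
  with k1 have "(u, w) \<in> (oct_E n)^^k1 O (oct_E n)^^k2" by auto
  then show ?thesis by (metis relpow_add)
qed

lemma dist_props:
  assumes "u \<in> oct_V n" "w \<in> oct_V n" "u \<noteq> w"
  shows "oct_dist n u w \<ge> 1" "l1 u w \<le> 2 * int (oct_dist n u w)"
proof -
  have ex: "\<exists>k. (u, w) \<in> (oct_E n)^^k" using connected assms by blast
  have P: "(u, w) \<in> (oct_E n)^^(oct_dist n u w)"
    unfolding oct_dist_def by (rule LeastI_ex[OF ex])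
  show "l1 u w \<le> 2 * int (oct_dist n u w)" using path_l1[OF P] .
  show "oct_dist n u w \<ge> 1"
  proof (rule ccontr)
    assume "\<not> 1 \<le> oct_dist n u w"
    then have "oct_dist n u w = 0" by simp
    with P have "u = w" by simp
    with assms show False by simp
  qed
qed


definition cl :: "int \<Rightarrow> int \<Rightarrow> int" where "cl p x = max 0 (min x p)"

lemma cl_mid: "0 \<le> x \<Longrightarrow> x \<le> p \<Longrightarrow> cl p x = x" unfolding cl_def by simp
lemma cl_hi: "0 \<le> p \<Longrightarrow> p \<le> x \<Longrightarrow> cl p x = p" unfolding cl_def by simp
lemma cl_lo: "x \<le> 0 \<Longrightarrow> cl p x = 0" unfolding cl_def by simp

fun rho :: "pt \<Rightarrow> pt \<Rightarrow> int" where
  "rho (a,b,c) (x,y,z) = a + b + c - cl a x - cl b y - cl c z"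

datatype st = SO | SF | SU

definition stf :: "int \<Rightarrow> int \<Rightarrow> st" where
  "stf p x = (if x < 0 then SU else if x < p then SF else SO)"

fun stt :: "pt \<Rightarrow> pt \<Rightarrow> st \<times> st \<times> st" where
  "stt (a,b,c) (x,y,z) = (stf a x, stf b y, stf c z)"

definition H2 :: "nat \<Rightarrow> real" where "H2 m = (\<Sum>k=1..m. 1 / (real k)^2)"

definition Reg :: "nat \<Rightarrow> nat \<Rightarrow> nat \<Rightarrow> st \<times> st \<times> st \<Rightarrow> pt set" where
  "Reg A B C t = {w \<in> oct_V (A+B+C). w \<noteq> (int A, int B, int C) \<and> stt (int A, int B, int C) w = t}"

definition Rs :: "nat \<Rightarrow> nat \<Rightarrow> nat \<Rightarrow> st \<times> st \<times> st \<Rightarrow> real" where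
  "Rs A B C t = (\<Sum>w \<in> Reg A B C t. 1 / (real_of_int (rho (int A, int B, int C) w))^2)"

lemma finite_V: "finite (oct_V n)"
proof -
  have "oct_V n \<subseteq> {-int n..int n} \<times> {-int n..int n} \<times> {-int n..int n}"
    unfolding oct_V_def by auto
  then show ?thesis by (rule finite_subset) auto
qed

lemma finite_Reg: "finite (Reg A B C t)"
  unfolding Reg_def using finite_V by simp

lemma sum_le_param:
  fixes f :: "'a \<Rightarrow> real"
  assumes "finite P" "S \<subseteq> g ` P" "\<And>x. f x \<ge> 0"
  shows "sum f S \<le> sum (f \<circ> g) P"
proof -
  have "sum f S \<le> sum f (g ` P)"
    using assms by (intro sum_mono2) auto
  also have "\<dots> \<le> sum (f \<circ> g) P"
    using assms by (intro sum_image_le) auto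
  finally show ?thesis .
qed

lemma sum_Sigma_pair:
  assumes "finite I" "\<And>d. d \<in> I \<Longrightarrow> finite (J d)"
  shows "sum h (Sigma I J) = (\<Sum>d\<in>I. \<Sum>e\<in>J d. h (d,e))"
  using assms by (subst sum.Sigma) auto

lemma hsum: "(\<Sum>d\<in>{1..C}. 1 / real (B + d)) = harm (B + C) - harm B"
proof (induction C)
  case 0 then show ?case by simp
next
  case (Suc C)
  then show ?case by (simp add: sum.cl_ivl_Suc harm_Suc inverse_eq_divide)
qed

lemma tele:
  assumes "t \<ge> 1"
  shows "(\<Sum>y\<in>{1..q}. 1 / (real (t + y))^2) \<le> 1 / real t - 1 / real (t + q)"
proof (induction q)
  case 0 then show ?case by simp
next
  case (Suc q)
  have "1 / (real (t + Suc q))^2 \<le> 1 / real (t + q) - 1 / real (t + Suc q)"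
  proof -
    have p: "real (t + q) > 0" using assms by simp
    have "1 / real (t + q) - 1 / real (t + Suc q) = 1 / (real (t+q) * real (t + Suc q))"
      using p by (simp add: field_simps)
    also have "\<dots> \<ge> 1 / (real (t + Suc q))^2"
      using p by (intro divide_left_mono) (auto simp: power2_eq_square intro!: mult_right_mono)
    finally show ?thesis .
  qed
  then show ?case using Suc.IH by (simp add: sum.cl_ivl_Suc add_ac)
qed

lemma twod:
  "(\<Sum>d1\<in>{1..q}. \<Sum>d2\<in>{1..r}. 1 / (real (s + d1 + d2))^2)
     \<le> (harm (s+q) - harm s) - (harm (s+q+r) - harm (s+r))"
proof -
  have "(\<Sum>d1\<in>{1..q}. \<Sum>d2\<in>{1..r}. 1 / (real (s + d1 + d2))^2)
      \<le> (\<Sum>d1\<in>{1..q}. 1 / real (s + d1) - 1 / real (s + d1 + r))"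
  proof (intro sum_mono)
    fix d1 assume "d1 \<in> {1..q}"
    then have "s + d1 \<ge> 1" by simp
    from tele[OF this, of r] show "(\<Sum>d2\<in>{1..r}. 1 / (real (s + d1 + d2))^2) \<le> 1 / real (s + d1) - 1 / real (s + d1 + r)"
      by (simp add: add.assoc)
  qed
  also have "\<dots> = (\<Sum>d1\<in>{1..q}. 1 / real (s + d1)) - (\<Sum>d1\<in>{1..q}. 1 / real ((s + r) + d1))"
    by (simp add: sum_subtractf algebra_simps)
  also have "\<dots> = (harm (s+q) - harm s) - (harm (s+q+r) - harm (s+r))"
  proof -
    have "(\<Sum>d1\<in>{1..q}. 1 / real (s + d1)) = harm (s+q) - harm s" by (rule hsum)
    moreover have "(\<Sum>d1\<in>{1..q}. 1 / real ((s + r) + d1)) = harm (s+r+q) - harm (s+r)" by (rule hsum)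
    ultimately show ?thesis by (simp add: add_ac)
  qed
  finally show ?thesis .
qed

lemma tri: "2 * (\<Sum>f\<in>{1..m}. m - f) = m * (m - (1::nat))"
proof (induction m)
  case 0 then show ?case by simp
next
  case (Suc m)
  have "(\<Sum>f\<in>{1..Suc m}. Suc m - f) = (\<Sum>f\<in>{1..m}. Suc m - f)" by (simp add: sum.cl_ivl_Suc)
  also have "\<dots> = (\<Sum>f\<in>{1..m}. (m - f) + 1)" by (intro sum.cong) auto
  also have "\<dots> = (\<Sum>f\<in>{1..m}. m - f) + m" by (simp only: sum.distrib) simp
  finally have "2 * (\<Sum>f\<in>{1..Suc m}. Suc m - f) = 2 * (\<Sum>f\<in>{1..m}. m - f) + 2 * m" by simp
  also have "\<dots> = m * (m - 1) + 2 * m" using Suc.IH by simp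
  also have "\<dots> = Suc m * (Suc m - 1)" by (cases m) (auto simp: algebra_simps)
  finally show ?case .
qed

lemma tri1: "2 * (\<Sum>e\<in>{0..m}. Suc m - e) = Suc m * (Suc m + (1::nat))"
proof (induction m)
  case 0 then show ?case by simp
next
  case (Suc m)
  have "(\<Sum>e\<in>{0..Suc m}. Suc (Suc m) - e) = (\<Sum>e\<in>{0..m}. Suc (Suc m) - e) + 1" by (simp add: sum.cl_ivl_Suc)
  also have "(\<Sum>e\<in>{0..m}. Suc (Suc m) - e) = (\<Sum>e\<in>{0..m}. (Suc m - e) + 1)" by (intro sum.cong) auto
  also have "\<dots> = (\<Sum>e\<in>{0..m}. Suc m - e) + (m+1)" by (simp only: sum.distrib) simp
  finally have "2 * (\<Sum>e\<in>{0..Suc m}. Suc (Suc m) - e) = 2 * (\<Sum>e\<in>{0..m}. Suc m - e) + 2 * (m+2)" by simp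
  also have "\<dots> = Suc (Suc m) * (Suc (Suc m) + 1)" using Suc.IH by (simp add: algebra_simps)
  finally show ?case .
qed

lemma half_div: "2 * (s::real) = x \<Longrightarrow> s / d = x / (2 * d)"
  by (cases "d = 0") (auto simp: field_simps)

lemma Rs_FOO: "Rs A B C (SF,SO,SO) \<le> harm A + H2 A"
proof -
  let ?u = "(int A, int B, int C)"
  let ?f = "\<lambda>w. 1 / (real_of_int (rho ?u w))^2"
  define g where "g = (\<lambda>(d::nat,e::nat). (int A - int d, int B + int e, int C + int d - int e))"
  define P where "P = Sigma {1..A} (\<lambda>d. {0..d})"
  have sub: "Reg A B C (SF,SO,SO) \<subseteq> g ` P"
  proof
    fix w assume w: "w \<in> Reg A B C (SF,SO,SO)"
    obtain x y z where wx: "w = (x,y,z)" by (cases w) auto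
    from w have h: "0 \<le> x" "x < int A" "y \<ge> int B" "z \<ge> int C" "\<bar>x\<bar>+\<bar>y\<bar>+\<bar>z\<bar> = int A + int B + int C"
      unfolding Reg_def oct_V_def wx by (auto simp: stf_def split: if_splits)
    have "(nat (int A - x), nat (y - int B)) \<in> P" using h unfolding P_def by auto
    moreover have "w = g (nat (int A - x), nat (y - int B))" using h unfolding g_def wx by auto
    ultimately show "w \<in> g ` P" by blast
  qed
  have "Rs A B C (SF,SO,SO) \<le> sum (?f \<circ> g) P"
    unfolding Rs_def by (rule sum_le_param[OF _ sub]) (auto simp: P_def)
  also have "\<dots> = (\<Sum>d\<in>{1..A}. \<Sum>e\<in>{0..d}. 1 / (real d)^2)"
    unfolding P_def
  proof (subst sum_Sigma_pair, simp, simp, intro sum.cong refl)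
    fix d e assume "d \<in> {1..A}" "e \<in> {0..d}"
    then have "rho ?u (g (d,e)) = int d"
      unfolding g_def by (simp add: cl_mid cl_hi)
    then show "(?f \<circ> g) (d, e) = 1 / (real d)^2" by simp
  qed
  also have "\<dots> = (\<Sum>d\<in>{1..A}. 1 / real d + 1 / (real d)^2)"
  proof (intro sum.cong refl)
    fix d assume "d \<in> {1..A}"
    then show "(\<Sum>e\<in>{0..d}. 1 / (real d)^2) = 1 / real d + 1 / (real d)^2"
      by (simp add: field_simps power2_eq_square)
  qed
  also have "\<dots> = harm A + H2 A"
    by (simp add: sum.distrib harm_def H2_def inverse_eq_divide)
  finally show ?thesis .
qed

lemma Rs_OUF: "Rs A B C (SO,SU,SF) \<le> harm (B + C) - harm B"
proof -
  let ?u = "(int A, int B, int C)"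
  let ?f = "\<lambda>w. 1 / (real_of_int (rho ?u w))^2"
  define g where "g = (\<lambda>(d::nat,f::nat). (int A + int B + int d - int f, - int f, int C - int d))"
  define P where "P = Sigma {1..C} (\<lambda>d. {1..B+d})"
  have sub: "Reg A B C (SO,SU,SF) \<subseteq> g ` P"
  proof
    fix w assume w: "w \<in> Reg A B C (SO,SU,SF)"
    obtain x y z where wx: "w = (x,y,z)" by (cases w) auto
    from w have h: "x \<ge> int A" "y < 0" "0 \<le> z" "z < int C" "\<bar>x\<bar>+\<bar>y\<bar>+\<bar>z\<bar> = int A + int B + int C"
      unfolding Reg_def oct_V_def wx by (auto simp: stf_def split: if_splits)
    have "(nat (int C - z), nat (- y)) \<in> P" using h unfolding P_def by auto
    moreover have "w = g (nat (int C - z), nat (- y))" using h unfolding g_def wx by auto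
    ultimately show "w \<in> g ` P" by blast
  qed
  have "Rs A B C (SO,SU,SF) \<le> sum (?f \<circ> g) P"
    unfolding Rs_def by (rule sum_le_param[OF _ sub]) (auto simp: P_def)
  also have "\<dots> = (\<Sum>d\<in>{1..C}. \<Sum>f\<in>{1..B+d}. 1 / (real (B + d))^2)"
    unfolding P_def
  proof (subst sum_Sigma_pair, simp, simp, intro sum.cong refl)
    fix d f assume "d \<in> {1..C}" "f \<in> {1..B+d}"
    then have "rho ?u (g (d,f)) = int B + int d"
      unfolding g_def by (simp add: cl_mid cl_hi cl_lo)
    then show "(?f \<circ> g) (d, f) = 1 / (real (B + d))^2" by simp
  qed
  also have "\<dots> = (\<Sum>d\<in>{1..C}. 1 / real (B + d))"
  proof (intro sum.cong refl)
    fix d assume "d \<in> {1..C}"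
    then have "real (B + d) > 0" by simp
    then show "(\<Sum>f\<in>{1..B+d}. 1 / (real (B + d))^2) = 1 / real (B + d)"
      by (simp add: power2_eq_square)
  qed
  also have "\<dots> = harm (B + C) - harm B" by (rule hsum)
  finally show ?thesis .
qed

lemma Rs_FUU: "Rs A B C (SF,SU,SU) \<le> harm (A + B + C) - harm (B + C)"
proof -
  let ?u = "(int A, int B, int C)"
  let ?f = "\<lambda>w. 1 / (real_of_int (rho ?u w))^2"
  define g where "g = (\<lambda>(d::nat,f::nat). (int A - int d, - int f, - (int B + int C + int d - int f)))"
  define P where "P = Sigma {1..A} (\<lambda>d. {1..B+C+d-1})"
  have sub: "Reg A B C (SF,SU,SU) \<subseteq> g ` P"
  proof
    fix w assume w: "w \<in> Reg A B C (SF,SU,SU)"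
    obtain x y z where wx: "w = (x,y,z)" by (cases w) auto
    from w have h: "0 \<le> x" "x < int A" "y < 0" "z < 0" "\<bar>x\<bar>+\<bar>y\<bar>+\<bar>z\<bar> = int A + int B + int C"
      unfolding Reg_def oct_V_def wx by (auto simp: stf_def split: if_splits)
    have "(nat (int A - x), nat (- y)) \<in> P" using h unfolding P_def by auto
    moreover have "w = g (nat (int A - x), nat (- y))" using h unfolding g_def wx by auto
    ultimately show "w \<in> g ` P" by blast
  qed
  have "Rs A B C (SF,SU,SU) \<le> sum (?f \<circ> g) P"
    unfolding Rs_def by (rule sum_le_param[OF _ sub]) (auto simp: P_def)
  also have "\<dots> = (\<Sum>d\<in>{1..A}. \<Sum>f\<in>{1..B+C+d-1}. 1 / (real (B + C + d))^2)"
    unfolding P_def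
  proof (subst sum_Sigma_pair, simp, simp, intro sum.cong refl)
    fix d f assume df: "d \<in> {1..A}" "f \<in> {1..B+C+d-1}"
    then have "int f \<le> int B + int C + int d" by auto
    then have "rho ?u (g (d,f)) = int B + int C + int d"
      unfolding g_def using df by (simp add: cl_mid cl_hi cl_lo)
    then show "(?f \<circ> g) (d, f) = 1 / (real (B + C + d))^2" by simp
  qed
  also have "\<dots> \<le> (\<Sum>d\<in>{1..A}. 1 / real (B + C + d))"
  proof (intro sum_mono)
    fix d assume d: "d \<in> {1..A}"
    have "(\<Sum>f\<in>{1..B+C+d-1}. 1 / (real (B + C + d))^2) = real (B+C+d-1) / (real (B + C + d))^2"
      by simp
    also have "\<dots> \<le> real (B+C+d) / (real (B + C + d))^2"
      by (intro divide_right_mono) auto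
    also have "\<dots> = 1 / real (B + C + d)" using d by (simp add: power2_eq_square)
    finally show "(\<Sum>f\<in>{1..B+C+d-1}. 1 / (real (B + C + d))^2) \<le> 1 / real (B + C + d)" .
  qed
  also have "\<dots> = harm (B + C + A) - harm (B + C)" by (rule hsum)
  finally show ?thesis by (simp add: add_ac)
qed

lemma Rs_OFF: "Rs A B C (SO,SF,SF) \<le> harm B + harm C - harm (B + C)"
proof -
  let ?u = "(int A, int B, int C)"
  let ?f = "\<lambda>w. 1 / (real_of_int (rho ?u w))^2"
  define g where "g = (\<lambda>(d1::nat,d2::nat). (int A + int d1 + int d2, int B - int d1, int C - int d2))"
  define P where "P = Sigma {1..B} (\<lambda>d. {1..C})"
  have sub: "Reg A B C (SO,SF,SF) \<subseteq> g ` P"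
  proof
    fix w assume w: "w \<in> Reg A B C (SO,SF,SF)"
    obtain x y z where wx: "w = (x,y,z)" by (cases w) auto
    from w have h: "x \<ge> int A" "0 \<le> y" "y < int B" "0 \<le> z" "z < int C" "\<bar>x\<bar>+\<bar>y\<bar>+\<bar>z\<bar> = int A + int B + int C"
      unfolding Reg_def oct_V_def wx by (auto simp: stf_def split: if_splits)
    have "(nat (int B - y), nat (int C - z)) \<in> P" using h unfolding P_def by auto
    moreover have "w = g (nat (int B - y), nat (int C - z))" using h unfolding g_def wx by auto
    ultimately show "w \<in> g ` P" by blast
  qed
  have "Rs A B C (SO,SF,SF) \<le> sum (?f \<circ> g) P"
    unfolding Rs_def by (rule sum_le_param[OF _ sub]) (auto simp: P_def)
  also have "\<dots> = (\<Sum>d1\<in>{1..B}. \<Sum>d2\<in>{1..C}. 1 / (real (0 + d1 + d2))^2)"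
    unfolding P_def
  proof (subst sum_Sigma_pair, simp, simp, intro sum.cong refl)
    fix d1 d2 assume "d1 \<in> {1..B}" "d2 \<in> {1..C}"
    then have "rho ?u (g (d1,d2)) = int d1 + int d2"
      unfolding g_def by (simp add: cl_mid cl_hi cl_lo)
    then show "(?f \<circ> g) (d1, d2) = 1 / (real (0 + d1 + d2))^2" by simp
  qed
  also have "\<dots> \<le> (harm (0+B) - harm 0) - (harm (0+B+C) - harm (0+C))" by (rule twod)
  finally show ?thesis by (simp add: harm_def)
qed

lemma Rs_UFF: "Rs A B C (SU,SF,SF) \<le> harm (A + B) - harm A + harm (A + C) - harm (A + B + C)"
proof -
  let ?u = "(int A, int B, int C)"
  let ?f = "\<lambda>w. 1 / (real_of_int (rho ?u w))^2"
  define g where "g = (\<lambda>(d1::nat,d2::nat). (- (int A + int d1 + int d2), int B - int d1, int C - int d2))"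
  define P where "P = Sigma {1..B} (\<lambda>d. {1..C})"
  have sub: "Reg A B C (SU,SF,SF) \<subseteq> g ` P"
  proof
    fix w assume w: "w \<in> Reg A B C (SU,SF,SF)"
    obtain x y z where wx: "w = (x,y,z)" by (cases w) auto
    from w have h: "x < 0" "0 \<le> y" "y < int B" "0 \<le> z" "z < int C" "\<bar>x\<bar>+\<bar>y\<bar>+\<bar>z\<bar> = int A + int B + int C"
      unfolding Reg_def oct_V_def wx by (auto simp: stf_def split: if_splits)
    have "(nat (int B - y), nat (int C - z)) \<in> P" using h unfolding P_def by auto
    moreover have "w = g (nat (int B - y), nat (int C - z))" using h unfolding g_def wx by auto
    ultimately show "w \<in> g ` P" by blast
  qed
  have "Rs A B C (SU,SF,SF) \<le> sum (?f \<circ> g) P"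
    unfolding Rs_def by (rule sum_le_param[OF _ sub]) (auto simp: P_def)
  also have "\<dots> = (\<Sum>d1\<in>{1..B}. \<Sum>d2\<in>{1..C}. 1 / (real (A + d1 + d2))^2)"
    unfolding P_def
  proof (subst sum_Sigma_pair, simp, simp, intro sum.cong refl)
    fix d1 d2 assume "d1 \<in> {1..B}" "d2 \<in> {1..C}"
    then have "rho ?u (g (d1,d2)) = int A + int d1 + int d2"
      unfolding g_def by (simp add: cl_mid cl_hi cl_lo)
    then show "(?f \<circ> g) (d1, d2) = 1 / (real (A + d1 + d2))^2" by simp
  qed
  also have "\<dots> \<le> (harm (A+B) - harm A) - (harm (A+B+C) - harm (A+C))" by (rule twod)
  finally show ?thesis by simp
qed

lemma Rs_UOO: "Rs A B C (SU,SO,SO) \<le> real (A * (A + 1)) / (2 * (real A)^2)"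
proof (cases "A = 0")
  case True
  have "Reg A B C (SU,SO,SO) = {}"
  proof (rule ccontr)
    assume "Reg A B C (SU,SO,SO) \<noteq> {}"
    then obtain x y z where "(x,y,z) \<in> Reg A B C (SU,SO,SO)" by auto
    then have h: "x < 0" "y \<ge> int B" "z \<ge> int C" "\<bar>x\<bar>+\<bar>y\<bar>+\<bar>z\<bar> = int A + int B + int C"
      unfolding Reg_def oct_V_def by (auto simp: stf_def split: if_splits)
    then show False using True by auto
  qed
  then show ?thesis unfolding Rs_def using True by simp
next
  case False
  then obtain m where m: "A = Suc m" by (cases A) auto
  let ?u = "(int A, int B, int C)"
  let ?f = "\<lambda>w. 1 / (real_of_int (rho ?u w))^2"
  define g where "g = (\<lambda>(e1::nat,e2::nat). (- (int A - int e1 - int e2), int B + int e1, int C + int e2))"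
  define P where "P = Sigma {0..m} (\<lambda>e1. {0..m-e1})"
  have sub: "Reg A B C (SU,SO,SO) \<subseteq> g ` P"
  proof
    fix w assume w: "w \<in> Reg A B C (SU,SO,SO)"
    obtain x y z where wx: "w = (x,y,z)" by (cases w) auto
    from w have h: "x < 0" "y \<ge> int B" "z \<ge> int C" "\<bar>x\<bar>+\<bar>y\<bar>+\<bar>z\<bar> = int A + int B + int C"
      unfolding Reg_def oct_V_def wx by (auto simp: stf_def split: if_splits)
    have "(nat (y - int B), nat (z - int C)) \<in> P" using h m unfolding P_def by auto
    moreover have "w = g (nat (y - int B), nat (z - int C))" using h unfolding g_def wx by auto
    ultimately show "w \<in> g ` P" by blast
  qed
  have "Rs A B C (SU,SO,SO) \<le> sum (?f \<circ> g) P"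
    unfolding Rs_def by (rule sum_le_param[OF _ sub]) (auto simp: P_def)
  also have "\<dots> = (\<Sum>e1\<in>{0..m}. \<Sum>e2\<in>{0..m-e1}. 1 / (real A)^2)"
    unfolding P_def
  proof (subst sum_Sigma_pair, simp, simp, intro sum.cong refl)
    fix e1 e2 assume "e1 \<in> {0..m}" "e2 \<in> {0..m-e1}"
    then have "rho ?u (g (e1,e2)) = int A"
      unfolding g_def using m by (simp add: cl_mid cl_hi cl_lo)
    then show "(?f \<circ> g) (e1, e2) = 1 / (real A)^2" by simp
  qed
  also have "\<dots> = real (\<Sum>e1\<in>{0..m}. Suc m - e1) / (real A)^2"
    by (simp add: sum_divide_distrib Suc_diff_le)
  also have "\<dots> = real (A * (A + 1)) / (2 * (real A)^2)"
  proof -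
    have "real (2 * (\<Sum>e1\<in>{0..m}. Suc m - e1)) = real (Suc m * (Suc m + 1))" using tri1[of m] by simp
    then show ?thesis using m by (simp add: field_simps)
  qed
  finally show ?thesis .
qed

lemma Rs_OUU: "Rs A B C (SO,SU,SU) \<le> real ((B + C) * (B + C - 1)) / (2 * (real (B + C))^2)"
proof -
  let ?u = "(int A, int B, int C)"
  let ?m = "B + C"
  let ?f = "\<lambda>w. 1 / (real_of_int (rho ?u w))^2"
  define g where "g = (\<lambda>(f1::nat,f2::nat). (int A + int B + int C - int f1 - int f2, - int f1, - int f2))"
  define P where "P = Sigma {1..B+C} (\<lambda>f1. {1..B+C-f1})"
  define S where "S = (\<Sum>f1\<in>{1..B+C}. B + C - f1)"
  have sub: "Reg A B C (SO,SU,SU) \<subseteq> g ` P"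
  proof
    fix w assume w: "w \<in> Reg A B C (SO,SU,SU)"
    obtain x y z where wx: "w = (x,y,z)" by (cases w) auto
    from w have h: "x \<ge> int A" "y < 0" "z < 0" "\<bar>x\<bar>+\<bar>y\<bar>+\<bar>z\<bar> = int A + int B + int C"
      unfolding Reg_def oct_V_def wx by (auto simp: stf_def split: if_splits)
    have "(nat (- y), nat (- z)) \<in> P" using h unfolding P_def by auto
    moreover have "w = g (nat (- y), nat (- z))" using h unfolding g_def wx by auto
    ultimately show "w \<in> g ` P" by blast
  qed
  have "Rs A B C (SO,SU,SU) \<le> sum (?f \<circ> g) P"
    unfolding Rs_def by (rule sum_le_param[OF _ sub]) (auto simp: P_def)
  also have "\<dots> = (\<Sum>f1\<in>{1..B+C}. \<Sum>f2\<in>{1..B+C-f1}. 1 / (real (B+C))^2)"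
    unfolding P_def
  proof (subst sum_Sigma_pair, simp, simp, intro sum.cong refl)
    fix f1 f2 assume ff: "f1 \<in> {1..B+C}" "f2 \<in> {1..B+C-f1}"
    then have "int f1 + int f2 \<le> int B + int C" by auto
    then have "rho ?u (g (f1,f2)) = int B + int C"
      unfolding g_def using ff by (simp add: cl_mid cl_hi cl_lo)
    then show "(?f \<circ> g) (f1, f2) = 1 / (real (B+C))^2" by simp
  qed
  also have "\<dots> = real S / (real (B+C))^2"
    unfolding S_def by (simp add: sum_divide_distrib)
  also have "\<dots> = real ((B + C) * (B + C - 1)) / (2 * (real (B + C))^2)"
  proof (rule half_div)
    have "2 * S = (B+C) * (B + C - 1)" using tri[of "B+C"] unfolding S_def .
    then show "2 * real S = real ((B+C) * (B + C - 1))" by (metis of_nat_mult of_nat_numeral)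
  qed
  finally show ?thesis .
qed

lemma Rs_UUU: "Rs A B C (SU,SU,SU) \<le> real ((A+B+C - 1) * (A+B+C - 1 - 1)) / (2 * (real (A+B+C))^2)"
proof -
  let ?u = "(int A, int B, int C)"
  let ?n = "A + B + C"
  let ?f = "\<lambda>w. 1 / (real_of_int (rho ?u w))^2"
  define g where "g = (\<lambda>(f1::nat,f2::nat). (- int f1, - int f2, - (int A + int B + int C - int f1 - int f2)))"
  define P where "P = Sigma {1..A+B+C-1} (\<lambda>f1. {1..A+B+C-1-f1})"
  define S where "S = (\<Sum>f1\<in>{1..A+B+C-1}. A+B+C-1 - f1)"
  have sub: "Reg A B C (SU,SU,SU) \<subseteq> g ` P"
  proof
    fix w assume w: "w \<in> Reg A B C (SU,SU,SU)"
    obtain x y z where wx: "w = (x,y,z)" by (cases w) auto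
    from w have h: "x < 0" "y < 0" "z < 0" "\<bar>x\<bar>+\<bar>y\<bar>+\<bar>z\<bar> = int A + int B + int C"
      unfolding Reg_def oct_V_def wx by (auto simp: stf_def split: if_splits)
    have "(nat (- x), nat (- y)) \<in> P" using h unfolding P_def by auto
    moreover have "w = g (nat (- x), nat (- y))" using h unfolding g_def wx by auto
    ultimately show "w \<in> g ` P" by blast
  qed
  have "Rs A B C (SU,SU,SU) \<le> sum (?f \<circ> g) P"
    unfolding Rs_def by (rule sum_le_param[OF _ sub]) (auto simp: P_def)
  also have "\<dots> = (\<Sum>f1\<in>{1..A+B+C-1}. \<Sum>f2\<in>{1..A+B+C-1-f1}. 1 / (real (A+B+C))^2)"
    unfolding P_def
  proof (subst sum_Sigma_pair, simp, simp, intro sum.cong refl)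
    fix f1 f2 assume ff: "f1 \<in> {1..A+B+C-1}" "f2 \<in> {1..A+B+C-1-f1}"
    then have "int f1 + int f2 \<le> int A + int B + int C" by auto
    then have "rho ?u (g (f1,f2)) = int A + int B + int C"
      unfolding g_def using ff by (simp add: cl_mid cl_hi cl_lo)
    then show "(?f \<circ> g) (f1, f2) = 1 / (real (A+B+C))^2" by simp
  qed
  also have "\<dots> = real S / (real (A+B+C))^2"
    unfolding S_def by (simp add: sum_divide_distrib)
  also have "\<dots> = real ((A+B+C - 1) * (A+B+C - 1 - 1)) / (2 * (real (A+B+C))^2)"
  proof (rule half_div)
    have "2 * S = (A+B+C - 1) * (A+B+C - 1 - 1)" using tri[of "A+B+C-1"] unfolding S_def .
    then show "2 * real S = real ((A+B+C - 1) * (A+B+C - 1 - 1))" by (metis of_nat_mult of_nat_numeral)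
  qed
  finally show ?thesis .
qed

lemma Rs_FFF: "Rs A B C (SF,SF,SF) = 0"
proof -
  have "Reg A B C (SF,SF,SF) = {}"
  proof (rule ccontr)
    assume "Reg A B C (SF,SF,SF) \<noteq> {}"
    then obtain x y z where "(x,y,z) \<in> Reg A B C (SF,SF,SF)" by auto
    then have h: "0 \<le> x" "x < int A" "0 \<le> y" "y < int B" "0 \<le> z" "z < int C" "\<bar>x\<bar>+\<bar>y\<bar>+\<bar>z\<bar> = int A + int B + int C"
      unfolding Reg_def oct_V_def by (auto simp: stf_def split: if_splits)
    then show False by auto
  qed
  then show ?thesis unfolding Rs_def by simp
qed

lemma Rs_OOO: "Rs A B C (SO,SO,SO) = 0"
proof -
  have "Reg A B C (SO,SO,SO) = {}"
  proof (rule ccontr)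
    assume "Reg A B C (SO,SO,SO) \<noteq> {}"
    then obtain x y z where w: "(x,y,z) \<in> Reg A B C (SO,SO,SO)" by auto
    then have h: "x \<ge> int A" "y \<ge> int B" "z \<ge> int C" "\<bar>x\<bar>+\<bar>y\<bar>+\<bar>z\<bar> = int A + int B + int C"
      "(x,y,z) \<noteq> (int A, int B, int C)"
      unfolding Reg_def oct_V_def by (auto simp: stf_def split: if_splits)
    then show False by auto
  qed
  then show ?thesis unfolding Rs_def by simp
qed


lemma Rs_swap12: "Rs A B C (s1,s2,s3) = Rs B A C (s2,s1,s3)"
  unfolding Rs_def
  by (rule sum.reindex_bij_witness[where i = "\<lambda>(x,y,z). (y,x,z)" and j = "\<lambda>(x,y,z). (y,x,z)"])
     (auto simp: Reg_def oct_V_def algebra_simps)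

lemma Rs_swap13: "Rs A B C (s1,s2,s3) = Rs C B A (s3,s2,s1)"
  unfolding Rs_def
  by (rule sum.reindex_bij_witness[where i = "\<lambda>(x,y,z). (z,y,x)" and j = "\<lambda>(x,y,z). (z,y,x)"])
     (auto simp: Reg_def oct_V_def algebra_simps)

lemma Rs_swap23: "Rs A B C (s1,s2,s3) = Rs A C B (s1,s3,s2)"
  unfolding Rs_def
  by (rule sum.reindex_bij_witness[where i = "\<lambda>(x,y,z). (x,z,y)" and j = "\<lambda>(x,y,z). (x,z,y)"])
     (auto simp: Reg_def oct_V_def algebra_simps)

lemma st_UNIV: "(UNIV :: st set) = {SO,SF,SU}"
proof -
  have "t \<in> {SO,SF,SU}" for t :: st by (cases t) auto
  then show ?thesis by blast
qed

lemma Reg_eq: "{w. w \<in> oct_V (A+B+C) - {(int A, int B, int C)} \<and> stt (int A, int B, int C) w = t} = Reg A B C t"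
  unfolding Reg_def by blast

lemma group27:
  "(\<Sum>w \<in> oct_V (A+B+C) - {(int A, int B, int C)}. 1 / (real_of_int (rho (int A, int B, int C) w))^2)
   = (\<Sum>s1\<in>{SO,SF,SU}. \<Sum>s2\<in>{SO,SF,SU}. \<Sum>s3\<in>{SO,SF,SU}. Rs A B C (s1,s2,s3))"
proof -
  let ?S = "oct_V (A+B+C) - {(int A, int B, int C)}"
  let ?f = "\<lambda>w. 1 / (real_of_int (rho (int A, int B, int C) w))^2"
  have fT: "finite (UNIV :: (st \<times> st \<times> st) set)"
    by (simp add: st_UNIV flip: UNIV_Times_UNIV)
  have "sum ?f ?S = (\<Sum>t \<in> (UNIV :: (st \<times> st \<times> st) set). sum ?f {w. w \<in> ?S \<and> stt (int A, int B, int C) w = t})"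
    by (rule sum.group[symmetric, OF _ fT]) (simp_all add: finite_V)
  also have "\<dots> = (\<Sum>t \<in> (UNIV :: (st \<times> st \<times> st) set). Rs A B C t)"
    unfolding Reg_eq Rs_def ..
  also have "\<dots> = (\<Sum>t \<in> {SO,SF,SU} \<times> {SO,SF,SU} \<times> {SO,SF,SU}. Rs A B C t)"
    by (simp only: st_UNIV flip: UNIV_Times_UNIV)
  also have "\<dots> = (\<Sum>s1\<in>{SO,SF,SU}. \<Sum>s2\<in>{SO,SF,SU}. \<Sum>s3\<in>{SO,SF,SU}. Rs A B C (s1,s2,s3))"
    by (simp only: sum.cartesian_product')
  finally show ?thesis .
qed

definition sp1 :: "nat \<Rightarrow> real" where "sp1 x = real (x * (x + 1)) / (2 * (real x)^2)"
definition sp2 :: "nat \<Rightarrow> real" where "sp2 m = real (m * (m - 1)) / (2 * (real m)^2)"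
definition sp3 :: "nat \<Rightarrow> real" where "sp3 n = real ((n - 1) * (n - 1 - 1)) / (2 * (real n)^2)"

definition Total :: "nat \<Rightarrow> nat \<Rightarrow> nat \<Rightarrow> real" where
  "Total A B C = 2 * harm (A+B) + 2 * harm (A+C) + 2 * harm (B+C) + H2 A + H2 B + H2 C
     + sp1 A + sp1 B + sp1 C + sp2 (B+C) + sp2 (A+C) + sp2 (A+B) + sp3 (A+B+C)"

lemma sum_le_Total:
  "(\<Sum>w \<in> oct_V (A+B+C) - {(int A, int B, int C)}. 1 / (real_of_int (rho (int A, int B, int C) w))^2)
   \<le> Total A B C"
proof -
  have t1: "Rs A B C (SO,SO,SO) = 0" by (rule Rs_OOO)
  have t2: "Rs A B C (SO,SO,SF) \<le> harm C + H2 C" using Rs_FOO[of C B A] Rs_swap13[of A B C] by simp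
  have t3: "Rs A B C (SO,SO,SU) \<le> sp1 C" using Rs_UOO[of C B A] Rs_swap13[of A B C] by (simp add: sp1_def)
  have t4: "Rs A B C (SO,SF,SO) \<le> harm B + H2 B" using Rs_FOO[of B A C] Rs_swap12[of A B C] by simp
  have t5: "Rs A B C (SO,SF,SF) \<le> harm B + harm C - harm (B+C)" by (rule Rs_OFF)
  have t6: "Rs A B C (SO,SF,SU) \<le> harm (B+C) - harm C" using Rs_OUF[of A C B] Rs_swap23[of A B C] by (simp add: add_ac)
  have t7: "Rs A B C (SO,SU,SO) \<le> sp1 B" using Rs_UOO[of B A C] Rs_swap12[of A B C] by (simp add: sp1_def)
  have t8: "Rs A B C (SO,SU,SF) \<le> harm (B+C) - harm B" by (rule Rs_OUF)
  have t9: "Rs A B C (SO,SU,SU) \<le> sp2 (B+C)" using Rs_OUU[of A B C] by (simp add: sp2_def)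
  have t10: "Rs A B C (SF,SO,SO) \<le> harm A + H2 A" by (rule Rs_FOO)
  have t11: "Rs A B C (SF,SO,SF) \<le> harm A + harm C - harm (A+C)" using Rs_OFF[of B A C] Rs_swap12[of A B C] by simp
  have t12: "Rs A B C (SF,SO,SU) \<le> harm (A+C) - harm C"
    using Rs_OUF[of B C A] Rs_swap12[of A B C] Rs_swap23[of B A C] by (simp add: add_ac)
  have t13: "Rs A B C (SF,SF,SO) \<le> harm A + harm B - harm (A+B)" using Rs_OFF[of C B A] Rs_swap13[of A B C] by (simp add: add_ac)
  have t14: "Rs A B C (SF,SF,SF) = 0" by (rule Rs_FFF)
  have t15: "Rs A B C (SF,SF,SU) \<le> harm (B+C) - harm C + harm (A+C) - harm (A+B+C)"
    using Rs_UFF[of C B A] Rs_swap13[of A B C] by (simp add: add_ac)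
  have t16: "Rs A B C (SF,SU,SO) \<le> harm (A+B) - harm B" using Rs_OUF[of C B A] Rs_swap13[of A B C] by (simp add: add_ac)
  have t17: "Rs A B C (SF,SU,SF) \<le> harm (A+B) - harm B + harm (B+C) - harm (A+B+C)"
    using Rs_UFF[of B A C] Rs_swap12[of A B C] by (simp add: add_ac)
  have t18: "Rs A B C (SF,SU,SU) \<le> harm (A+B+C) - harm (B+C)" by (rule Rs_FUU)
  have t19: "Rs A B C (SU,SO,SO) \<le> sp1 A" using Rs_UOO[of A B C] by (simp add: sp1_def)
  have t20: "Rs A B C (SU,SO,SF) \<le> harm (A+C) - harm A" using Rs_OUF[of B A C] Rs_swap12[of A B C] by (simp add: add_ac)
  have t21: "Rs A B C (SU,SO,SU) \<le> sp2 (A+C)" using Rs_OUU[of B A C] Rs_swap12[of A B C] by (simp add: sp2_def add_ac)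
  have t22: "Rs A B C (SU,SF,SO) \<le> harm (A+B) - harm A"
    using Rs_OUF[of C A B] Rs_swap12[of A B C] Rs_swap13[of B A C] by (simp add: add_ac)
  have t23: "Rs A B C (SU,SF,SF) \<le> harm (A+B) - harm A + harm (A+C) - harm (A+B+C)" by (rule Rs_UFF)
  have t24: "Rs A B C (SU,SF,SU) \<le> harm (A+B+C) - harm (A+C)" using Rs_FUU[of B A C] Rs_swap12[of A B C] by (simp add: add_ac)
  have t25: "Rs A B C (SU,SU,SO) \<le> sp2 (A+B)" using Rs_OUU[of C B A] Rs_swap13[of A B C] by (simp add: sp2_def add_ac)
  have t26: "Rs A B C (SU,SU,SF) \<le> harm (A+B+C) - harm (A+B)" using Rs_FUU[of C B A] Rs_swap13[of A B C] by (simp add: add_ac)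
  have t27: "Rs A B C (SU,SU,SU) \<le> sp3 (A+B+C)" using Rs_UUU[of A B C] by (simp add: sp3_def)
  have e: "(\<Sum>s1\<in>{SO,SF,SU}. \<Sum>s2\<in>{SO,SF,SU}. \<Sum>s3\<in>{SO,SF,SU}. Rs A B C (s1,s2,s3)) =
     Rs A B C (SO,SO,SO) + Rs A B C (SO,SO,SF) + Rs A B C (SO,SO,SU) +
     Rs A B C (SO,SF,SO) + Rs A B C (SO,SF,SF) + Rs A B C (SO,SF,SU) +
     Rs A B C (SO,SU,SO) + Rs A B C (SO,SU,SF) + Rs A B C (SO,SU,SU) +
     Rs A B C (SF,SO,SO) + Rs A B C (SF,SO,SF) + Rs A B C (SF,SO,SU) +
     Rs A B C (SF,SF,SO) + Rs A B C (SF,SF,SF) + Rs A B C (SF,SF,SU) +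
     Rs A B C (SF,SU,SO) + Rs A B C (SF,SU,SF) + Rs A B C (SF,SU,SU) +
     Rs A B C (SU,SO,SO) + Rs A B C (SU,SO,SF) + Rs A B C (SU,SO,SU) +
     Rs A B C (SU,SF,SO) + Rs A B C (SU,SF,SF) + Rs A B C (SU,SF,SU) +
     Rs A B C (SU,SU,SO) + Rs A B C (SU,SU,SF) + Rs A B C (SU,SU,SU)"
    by (simp add: add.assoc)
  have t1': "Rs A B C (SO,SO,SO) \<le> 0" using t1 by simp
  have t14': "Rs A B C (SF,SF,SF) \<le> 0" using t14 by simp
  have "(\<Sum>s1\<in>{SO,SF,SU}. \<Sum>s2\<in>{SO,SF,SU}. \<Sum>s3\<in>{SO,SF,SU}. Rs A B C (s1,s2,s3)) \<le> (0) + (harm C + H2 C) + (sp1 C) + (harm B + H2 B) + (harm B + harm C - harm (B+C)) + (harm (B+C) - harm C) + (sp1 B) + (harm (B+C) - harm B) + (sp2 (B+C)) + (harm A + H2 A) + (harm A + harm C - harm (A+C)) + (harm (A+C) - harm C) + (harm A + harm B - harm (A+B)) + (0) + (harm (B+C) - harm C + harm (A+C) - harm (A+B+C)) + (harm (A+B) - harm B) + (harm (A+B) - harm B + harm (B+C) - harm (A+B+C)) + (harm (A+B+C) - harm (B+C)) + (sp1 A) + (harm (A+C) - harm A) + (sp2 (A+C)) + (harm (A+B) - harm A) + (harm (A+B) - harm A + harm (A+C) - harm (A+B+C)) + (harm (A+B+C) - harm (A+C)) + (sp2 (A+B)) + (harm (A+B+C) - harm (A+B)) + (sp3 (A+B+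C))"
    unfolding e
    using t1' t2 t3 t4 t5 t6 t7 t8 t9 t10 t11 t12 t13 t14' t15 t16 t17 t18 t19 t20 t21 t22 t23 t24 t25 t26 t27
    by (intro add_mono) assumption+
  also have "(0) + (harm C + H2 C) + (sp1 C) + (harm B + H2 B) + (harm B + harm C - harm (B+C)) + (harm (B+C) - harm C) + (sp1 B) + (harm (B+C) - harm B) + (sp2 (B+C)) + (harm A + H2 A) + (harm A + harm C - harm (A+C)) + (harm (A+C) - harm C) + (harm A + harm B - harm (A+B)) + (0) + (harm (B+C) - harm C + harm (A+C) - harm (A+B+C)) + (harm (A+B) - harm B) + (harm (A+B) - harm B + harm (B+C) - harm (A+B+C)) + (harm (A+B+C) - harm (B+C)) + (sp1 A) + (harm (A+C) - harm A) + (sp2 (A+C)) + (harm (A+B) - harm A) + (harm (A+B) - harm A + harm (A+C) - harm (A+B+C)) + (harm (A+B+C) - harm (A+C)) + (sp2 (A+B)) + (harm (A+B+C) - harm (A+B)) + (sp3 (A+B+C)) = Total A B C"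
    unfolding Total_def by (simp add: algebra_simps)
  finally show ?thesis unfolding group27 .
qed


lemma harm_bound: "harm m \<le> 13/22 + ln (real m + 1) - 1 / (2 * (real m + 1))"
proof (cases m)
  case 0
  then show ?thesis by (simp add: harm_def)
next
  case (Suc k)
  have "euler_mascheroni \<ge> harm (Suc k) - ln (real_of_nat (k + 2)) + 1/real_of_nat (2 * (k + 2))"
    by (rule euler_mascheroni_lower)
  moreover have "(euler_mascheroni :: real) < 13/22" by (rule euler_mascheroni_less_13_over_22)
  ultimately show ?thesis using Suc by (simp add: add_ac)
qed

lemma H2_Suc: "H2 (Suc m) = H2 m + 1 / (real (Suc m))^2"
  unfolding H2_def by (simp add: sum.cl_ivl_Suc)

lemma H2_tail: "m \<ge> 4 \<Longrightarrow> H2 m + 2 / (2 * real m + 1) \<le> H2 4 + 2 / 9"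
proof (induction m rule: dec_induct)
  case base then show ?case by simp
next
  case (step m)
  have "1 / (real (Suc m))^2 \<le> 2 / (2 * real m + 1) - 2 / (2 * real (Suc m) + 1)"
  proof -
    have e: "2 / (2 * real m + 1) - 2 / (2 * real (Suc m) + 1) = 4 / ((2 * real m + 1) * (2 * real m + 3))"
      by (simp add: field_simps)
    have pos: "0 < (4 * (real (Suc m))^2) * ((2 * real m + 1) * (2 * real m + 3))"
      by (intro mult_pos_pos) auto
    have "4 / (4 * (real (Suc m))^2) \<le> 4 / ((2 * real m + 1) * (2 * real m + 3))"
      by (rule divide_left_mono[OF _ _ pos]) (auto simp: power2_eq_square algebra_simps)
    moreover have "4 / (4 * (real (Suc m))^2) = 1 / (real (Suc m))^2" by simp
    ultimately show ?thesis using e by simp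
  qed
  then show ?case using step.IH by (simp add: H2_Suc)
qed

lemma H2_4: "H2 4 = 205/144"
  by (simp add: H2_def numeral_eq_Suc sum.cl_ivl_Suc)

lemma H2_bound: "m \<ge> 1 \<Longrightarrow> H2 m \<le> 1647/1000 - 1 / (real m + 1)"
proof -
  assume m: "m \<ge> 1"
  show ?thesis
  proof (cases "m \<ge> 4")
    case True
    have "H2 m + 2 / (2 * real m + 1) \<le> 205/144 + 2 / 9" using H2_tail[OF True] H2_4 by simp
    moreover have "1 / (real m + 1) \<le> 2 / (2 * real m + 1)" by (simp add: field_simps)
    ultimately show ?thesis by simp
  next
    case False
    then have "m = 1 \<or> m = 2 \<or> m = 3" using m by auto
    then show ?thesis by (auto simp: H2_def numeral_eq_Suc sum.cl_ivl_Suc)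
  qed
qed


lemma G_bound: "H2 m + sp1 m \<le> 2147/1000"
proof (cases "m = 0")
  case True then show ?thesis by (simp add: H2_def sp1_def)
next
  case False
  then have m: "m \<ge> 1" by simp
  have "sp1 m = 1/2 + 1 / (2 * real m)" using m by (simp add: sp1_def field_simps power2_eq_square)
  moreover have "1 / (2 * real m) \<le> 1 / (real m + 1)" using m by (simp add: field_simps)
  ultimately show ?thesis using H2_bound[OF m] by simp
qed

lemma sp2_bound: "sp2 q - 1 / (real q + 1) \<le> 1/2 - 3 / (2 * (real q + 1))"
proof (cases "q = 0")
  case True then show ?thesis by (simp add: sp2_def)
next
  case False
  then have q: "q \<ge> 1" by simp
  have "sp2 q = 1/2 - 1 / (2 * real q)" using q by (simp add: sp2_def field_simps power2_eq_square of_nat_diff)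
  moreover have "1 / (2 * (real q + 1)) \<le> 1 / (2 * real q)" using q by (simp add: field_simps)
  moreover have "3 / (2 * (real q + 1)) = 1 / (real q + 1) + 1 / (2 * (real q + 1))"
  proof -
    have "3 / (2 * (real q + 1)) = (2 + 1) / (2 * (real q + 1))" by simp
    also have "\<dots> = 2 / (2 * (real q + 1)) + 1 / (2 * (real q + 1))" by (rule add_divide_distrib)
    also have "2 / (2 * (real q + 1)) = 1 / (real q + 1)"
      by (metis mult_divide_mult_cancel_left_if mult.right_neutral zero_neq_numeral)
    finally show ?thesis .
  qed
  ultimately show ?thesis by (smt (verit))
qed

lemma ln_tangent: fixes x M :: real shows "x > 0 \<Longrightarrow> M > 0 \<Longrightarrow> ln x \<le> ln M + x / M - 1"
proof -
  assume x: "x > 0" and M: "M > 0"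
  have "ln (x / M) \<le> x / M - 1" using x M by (intro ln_le_minus_one) simp
  moreover have "ln (x / M) = ln x - ln M" using x M by (simp add: ln_div)
  ultimately show ?thesis by simp
qed

lemma recip_tangent: fixes x M :: real shows "x > 0 \<Longrightarrow> M > 0 \<Longrightarrow> 2 / M - x / M^2 \<le> 1 / x"
proof -
  assume x: "x > 0" and M: "M > 0"
  have "1 / x - (2 / M - x / M^2) = (x - M)^2 / (x * M^2)"
    using x M by (simp add: field_simps power2_eq_square)
  moreover have "(x - M)^2 / (x * M^2) \<ge> 0" using x M by simp
  ultimately show ?thesis by simp
qed

lemma ln3_lower: "1098/1000 \<le> ln (3::real)"
proof -
  have "ln (3::real) \<in> {(\<Sum>k<4. 2*((3-1)/(3+1))^(2*k+1) / of_nat (2*k+1))..(\<Sum>k<4. 2*((3-1)/(3+1))^(2*k+1) / of_nat (2*k+1)) + 2*(((3-1)/(3+1))^(2*4+1) / (1 - ((3-1)/(3+1))^2) / of_nat (2*4+1))}"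
    by (rule ln_approx_bounds) simp
  then show ?thesis by (simp add: eval_nat_numeral)
qed

lemma poly_part:
  fixes n :: real
  assumes "n \<ge> 4"
  shows "(n-1)*(n-2)/(2*n^2) + 9*(4*n+3)/(2*n*(2*n+3)) - 27/(2*(2*n+3)) \<le> 106/100"
proof -
  have p: "n > 0" "2*n+3 > 0" using assms by auto
  have eq: "(n-1)*(n-2)/(2*n^2) + 9*(4*n+3)/(2*n*(2*n+3)) - 27/(2*(2*n+3))
      = ((n-1)*(n-2)*(2*n+3) + 9*(4*n+3)*n - 27*n^2) / (2*n^2*(2*n+3))"
    using p by (simp add: divide_simps power2_eq_square) (simp add: algebra_simps)
  have n3: "n*n*n \<ge> 16 * n"
  proof -
    have "n * n \<ge> 16" using assms mult_mono[of 4 n 4 n] by simp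
    then show ?thesis using p mult_right_mono[of 16 "n*n" n] by (simp add: mult.commute)
  qed
  have e1: "(n-1)*(n-2)*(2*n+3) + 9*(4*n+3)*n - 27*n^2 = 2*(n*n*n) + 6*(n*n) + 22*n + 6"
    by (simp add: algebra_simps power2_eq_square)
  have e2: "106/100 * (2*n^2*(2*n+3)) = 424/100*(n*n*n) + 636/100*(n*n)"
    by (simp add: algebra_simps power2_eq_square)
  have nn: "n*n \<ge> 0" by simp
  have key: "(n-1)*(n-2)*(2*n+3) + 9*(4*n+3)*n - 27*n^2 \<le> 106/100 * (2*n^2*(2*n+3))"
    unfolding e1 e2 using n3 nn assms by linarith
  have "((n-1)*(n-2)*(2*n+3) + 9*(4*n+3)*n - 27*n^2) / (2*n^2*(2*n+3)) \<le> 106/100"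
    using key p by (simp add: divide_le_eq)
  then show ?thesis using eq by simp
qed
lemma poly_part2:
  fixes n :: real
  assumes "n \<ge> 4"
  shows "(n-1)*(n-2)/(2*n^2) + 9*(1/(2*n) + 1/(2*n+3)) - 27/(2*(2*n+3)) \<le> 106/100"
proof -
  have p: "n > 0" "2*n+3 > 0" using assms by auto
  have eq: "(n-1)*(n-2)/(2*n^2) + 9*(1/(2*n) + 1/(2*n+3)) - 27/(2*(2*n+3))
      = ((n-1)*(n-2)*(2*n+3) + 9*(4*n+3)*n - 27*n^2) / (2*n^2*(2*n+3))"
    using p by (simp add: divide_simps power2_eq_square) (simp add: algebra_simps)
  have n3: "n*n*n \<ge> 16 * n"
  proof -
    have "n * n \<ge> 16" using assms mult_mono[of 4 n 4 n] by simp
    then show ?thesis using p mult_right_mono[of 16 "n*n" n] by (simp add: mult.commute)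
  qed
  have e1: "(n-1)*(n-2)*(2*n+3) + 9*(4*n+3)*n - 27*n^2 = 2*(n*n*n) + 6*(n*n) + 22*n + 6"
    by (simp add: algebra_simps power2_eq_square)
  have e2: "106/100 * (2*n^2*(2*n+3)) = 424/100*(n*n*n) + 636/100*(n*n)"
    by (simp add: algebra_simps power2_eq_square)
  have nn: "n*n \<ge> 0" by simp
  have key: "(n-1)*(n-2)*(2*n+3) + 9*(4*n+3)*n - 27*n^2 \<le> 106/100 * (2*n^2*(2*n+3))"
    unfolding e1 e2 using n3 nn assms by linarith
  have "((n-1)*(n-2)*(2*n+3) + 9*(4*n+3)*n - 27*n^2) / (2*n^2*(2*n+3)) \<le> 106/100"
    using key p by (simp add: divide_le_eq)
  then show ?thesis using eq by simp
qed

lemma Total_large: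
  assumes N4: "A + B + C \<ge> 4"
  shows "Total A B C \<le> 6 + 6 * ln (2 * real (A + B + C))"
proof -
  define n where "n = real (A + B + C)"
  define M where "M = (2 * n + 3) / 3"
  have n4: "n \<ge> 4" using N4 unfolding n_def by simp
  have Mpos: "M > 0" unfolding M_def using n4 by simp
  have psum: "(real (A+B) + 1) + (real (A+C) + 1) + (real (B+C) + 1) = 3 * M"
    unfolding M_def n_def by simp
  have h1: "harm p \<le> 13/22 + ln (real p + 1) - 1 / (2 * (real p + 1))" for p by (rule harm_bound)
  have h2: "ln (real p + 1) \<le> ln M + (real p + 1) / M - 1" for p
    using Mpos by (intro ln_tangent) auto
  have lnsum: "ln (real (A+B) + 1) + ln (real (A+C) + 1) + ln (real (B+C) + 1) \<le> 3 * ln M"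
  proof -
    have "ln (real (A+B) + 1) + ln (real (A+C) + 1) + ln (real (B+C) + 1)
       \<le> 3 * ln M + ((real (A+B) + 1) + (real (A+C) + 1) + (real (B+C) + 1)) / M - 3"
      using h2[of "A+B"] h2[of "A+C"] h2[of "B+C"] by (simp add: add_divide_distrib)
    also have "\<dots> = 3 * ln M" using psum Mpos by simp
    finally show ?thesis .
  qed
  have h5: "2 / M - (real p + 1) / M^2 \<le> 1 / (real p + 1)" for p
    using Mpos by (intro recip_tangent) auto
  have recsum: "3 / M \<le> 1 / (real (A+B) + 1) + 1 / (real (A+C) + 1) + 1 / (real (B+C) + 1)"
  proof -
    have "6 / M - ((real (A+B) + 1) + (real (A+C) + 1) + (real (B+C) + 1)) / M^2
        \<le> 1 / (real (A+B) + 1) + 1 / (real (A+C) + 1) + 1 / (real (B+C) + 1)"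
      using h5[of "A+B"] h5[of "A+C"] h5[of "B+C"] by (simp add: add_divide_distrib)
    moreover have "6 / M - ((real (A+B) + 1) + (real (A+C) + 1) + (real (B+C) + 1)) / M^2 = 3 / M"
      unfolding psum using Mpos by (simp add: power2_eq_square field_simps)
    ultimately show ?thesis by simp
  qed
  have 3: "3 / M = 9 / (2 * n + 3)" unfolding M_def by simp
  have sp3e: "sp3 (A + B + C) = (n - 1) * (n - 2) / (2 * n^2)"
  proof -
    have "real ((A+B+C - 1) * (A+B+C - 1 - 1)) = (n - 1) * (n - 2)"
      using N4 unfolding n_def by (simp add: of_nat_diff)
    then show ?thesis unfolding sp3_def n_def by simp
  qed
  have T: "Total A B C \<le> 6 * (13/22) + 6 * ln M + 3/2 - 27 / (2 * (2 * n + 3)) + 3 * (2147/1000) + (n - 1) * (n - 2) / (2 * n^2)"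
  proof -
    have g: "H2 A + sp1 A \<le> 2147/1000" "H2 B + sp1 B \<le> 2147/1000" "H2 C + sp1 C \<le> 2147/1000"
      by (rule G_bound)+
    have s: "sp2 (A+B) - 1 / (real (A+B) + 1) \<le> 1/2 - 3 / (2 * (real (A+B) + 1))"
            "sp2 (A+C) - 1 / (real (A+C) + 1) \<le> 1/2 - 3 / (2 * (real (A+C) + 1))"
            "sp2 (B+C) - 1 / (real (B+C) + 1) \<le> 1/2 - 3 / (2 * (real (B+C) + 1))"
      by (rule sp2_bound)+
    have hh: "harm (A+B) \<le> 13/22 + ln (real (A+B) + 1) - 1 / (2 * (real (A+B) + 1))"
             "harm (A+C) \<le> 13/22 + ln (real (A+C) + 1) - 1 / (2 * (real (A+C) + 1))"
             "harm (B+C) \<le> 13/22 + ln (real (B+C) + 1) - 1 / (2 * (real (B+C) + 1))"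
      by (rule h1)+
    have d2: "3 / (2 * x) = (3/2) * (1 / x)" "1 / (2 * x) = (1/2) * (1 / x)" for x :: real by simp_all
    have "27 / (2 * (2 * n + 3)) = (3/2) * (9 / (2 * n + 3))" by simp
    then show ?thesis unfolding Total_def sp3e
      using g s hh lnsum recsum 3 by (simp only: d2)
  qed
  have n0: "2 * n > 0" "2 * n + 3 > 0" using n4 by auto
  have lnM: "ln M = ln (2 * n + 3) - ln 3" unfolding M_def using n0 by (simp add: ln_div)
  have lna: "ln (2 * n + 3) - ln (2 * n) \<le> 3 * (inverse (2 * n) + inverse (2 * n + 3)) / 2"
    using ln_inverse_approx_le[of "2 * n" 3] n0 by simp
  have pp: "(n-1)*(n-2)/(2*n^2) + 9*(1/(2*n) + 1/(2*n+3)) - 27/(2*(2*n+3)) \<le> 106/100"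
    by (rule poly_part2[OF n4])
  have l3: "1098/1000 \<le> ln (3::real)" by (rule ln3_lower)
  have "6 * (3 * (inverse (2 * n) + inverse (2 * n + 3)) / 2) = 9*(1/(2*n) + 1/(2*n+3))"
    by (simp add: inverse_eq_divide)
  then show ?thesis
    using T lnM lna pp l3 unfolding n_def[symmetric] by linarith
qed


lemma harm_vals: "harm (0::nat) = (0::real)" "harm (1::nat) = (1::real)" "harm (2::nat) = (3/2::real)" "harm (3::nat) = (11/6::real)"
  by (simp_all add: harm_def numeral_eq_Suc sum.cl_ivl_Suc)

lemma H2_vals: "H2 0 = 0" "H2 1 = 1" "H2 2 = 5/4" "H2 3 = 49/36"
  by (simp_all add: H2_def numeral_eq_Suc sum.cl_ivl_Suc)

lemma sp_vals: "sp1 0 = 0" "sp1 1 = 1" "sp1 2 = 3/4" "sp1 3 = 2/3"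
  "sp2 0 = 0" "sp2 1 = 0" "sp2 2 = 1/4" "sp2 3 = 1/3"
  "sp3 1 = 0" "sp3 2 = 0" "sp3 3 = 1/9"
  by (simp_all add: sp1_def sp2_def sp3_def)


lemma vals_Suc: "harm (Suc 0) = (1::real)" "harm (Suc (Suc 0)) = (3/2::real)" "harm (Suc (Suc (Suc 0))) = (11/6::real)"
  "H2 (Suc 0) = 1" "H2 (Suc (Suc 0)) = 5/4" "H2 (Suc (Suc (Suc 0))) = 49/36"
  "sp1 (Suc 0) = 1" "sp1 (Suc (Suc 0)) = 3/4" "sp1 (Suc (Suc (Suc 0))) = 2/3"
  "sp2 (Suc 0) = 0" "sp2 (Suc (Suc 0)) = 1/4" "sp2 (Suc (Suc (Suc 0))) = 1/3"
  "sp3 (Suc 0) = 0" "sp3 (Suc (Suc 0)) = 0" "sp3 (Suc (Suc (Suc 0))) = 1/9"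
  using harm_vals H2_vals sp_vals by (simp_all add: numeral_eq_Suc)

lemma "Total 1 1 1 \<le> 16"
  by (simp add: Total_def harm_vals H2_vals sp_vals vals_Suc)
lemma "Total 0 1 2 \<le> 16"
  by (simp add: Total_def harm_vals H2_vals sp_vals vals_Suc)

lemma Total_n1: "A + B + C = 1 \<Longrightarrow> Total A B C \<le> 10"
proof -
  assume h: "A + B + C = 1"
  then have C: "C = 1 - A - B" and AB: "A + B \<le> 1" by auto
  have "A \<in> {0,1}" "B \<in> {0,1}" using AB by auto
  then show ?thesis using AB unfolding C by (auto simp: Total_def harm_vals H2_vals sp_vals vals_Suc)
qed

lemma Total_n2: "A + B + C = 2 \<Longrightarrow> Total A B C \<le> 14"
proof -
  assume h: "A + B + C = 2"
  then have C: "C = 2 - A - B" and AB: "A + B \<le> 2" by auto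
  have "A \<in> {0,1,2}" "B \<in> {0,1,2}" using AB by auto
  then show ?thesis using AB unfolding C by (auto simp: Total_def harm_vals H2_vals sp_vals vals_Suc)
qed

lemma Total_n3: "A + B + C = 3 \<Longrightarrow> Total A B C \<le> 16"
proof -
  assume h: "A + B + C = 3"
  then have C: "C = 3 - A - B" and AB: "A + B \<le> 3" by auto
  have "A \<in> {0,1,2,3}" "B \<in> {0,1,2,3}" using AB by auto
  then show ?thesis using AB unfolding C by (auto simp: Total_def harm_vals H2_vals sp_vals vals_Suc)
qed


lemma Total_bound:
  assumes "A + B + C \<ge> 1"
  shows "Total A B C \<le> 6 + 6 * ln (2 * real (A + B + C))"
proof -
  have l2: "2/3 \<le> ln (2::real)" by (rule ln2_ge_two_thirds)
  have l3: "1098/1000 \<le> ln (3::real)" by (rule ln3_lower)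
  consider "A + B + C = 1" | "A + B + C = 2" | "A + B + C = 3" | "A + B + C \<ge> 4" using assms by linarith
  then show ?thesis
  proof cases
    case 1 then show ?thesis using Total_n1[OF 1] l2 by simp
  next
    case 2
    have e: "2 * real (A+B+C) = 2 * 2" using 2 by simp
    have "ln (2 * real (A+B+C)) = ln 2 + ln 2" unfolding e using ln_mult[of "2::real" 2] by simp
    then show ?thesis using Total_n2[OF 2] l2 by simp
  next
    case 3
    have e: "2 * real (A+B+C) = 2 * 3" using 3 by simp
    have "ln (2 * real (A+B+C)) = ln 2 + ln 3" unfolding e using ln_mult[of "2::real" 3] by simp
    then show ?thesis using Total_n3[OF 3] l2 l3 by simp
  next
    case 4 then show ?thesis by (rule Total_large)
  qed
qed


lemma coord_l1: "0 \<le> p \<Longrightarrow> \<bar>p - x\<bar> = \<bar>x\<bar> + p - 2 * cl p x"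
  unfolding cl_def by (cases "x < 0"; cases "x \<le> p") auto

lemma l1_rho:
  assumes "0 \<le> a" "0 \<le> b" "0 \<le> c" "\<bar>x\<bar> + \<bar>y\<bar> + \<bar>z\<bar> = a + b + c"
  shows "l1 (a,b,c) (x,y,z) = 2 * rho (a,b,c) (x,y,z)"
  using coord_l1[OF assms(1), of x] coord_l1[OF assms(2), of y] coord_l1[OF assms(3), of z] assms(4)
  by simp

definition sgn1 :: "int \<Rightarrow> int" where "sgn1 a = (if a < 0 then -1 else 1)"

fun flip :: "pt \<Rightarrow> pt \<Rightarrow> pt" where
  "flip (a,b,c) (x,y,z) = (sgn1 a * x, sgn1 b * y, sgn1 c * z)"

lemma sgn1_sq: "sgn1 a * (sgn1 a * x) = x" unfolding sgn1_def by simp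
lemma sgn1_abs: "\<bar>sgn1 a * x\<bar> = \<bar>x\<bar>" unfolding sgn1_def by simp
lemma sgn1_self: "sgn1 a * a = \<bar>a\<bar>" unfolding sgn1_def by simp

lemma flip_invol: "flip u (flip u w) = w"
  by (cases u; cases w) (simp add: sgn1_sq)

lemma flip_V: "w \<in> oct_V n \<Longrightarrow> flip u w \<in> oct_V n"
  by (cases u; cases w) (simp add: oct_V_def sgn1_abs)

lemma flip_l1: "l1 (flip u v) (flip u w) = l1 v w"
proof -
  have "\<bar>sgn1 a * x - sgn1 a * y\<bar> = \<bar>x - y\<bar>" for a x y
    by (metis sgn1_abs right_diff_distrib)
  then show ?thesis by (cases u; cases v; cases w) simp
qed

lemma main_sum_bound:
  assumes n1: "n \<ge> 1" and u: "u \<in> oct_V n"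
  shows "(\<Sum>w \<in> oct_V n - {u}. 1 / (real (oct_dist n u w))^2) \<le> 6 + 6 * ln (2 * real n)"
proof -
  obtain a b c where uabc: "u = (a,b,c)" by (cases u) auto
  define A where "A = nat \<bar>a\<bar>"
  define B where "B = nat \<bar>b\<bar>"
  define C where "C = nat \<bar>c\<bar>"
  have hu: "\<bar>a\<bar> + \<bar>b\<bar> + \<bar>c\<bar> = int n" using u unfolding uabc oct_V_def by simp
  have nABC: "A + B + C = n" unfolding A_def B_def C_def using hu by linarith
  have fu: "flip u u = (int A, int B, int C)"
    unfolding uabc A_def B_def C_def by (simp add: sgn1_self)
  let ?u' = "(int A, int B, int C)"
  let ?g = "\<lambda>w. 1 / (real_of_int (rho ?u' w))^2"
  have step1: "1 / (real (oct_dist n u w))^2 \<le> ?g (flip u w)" if w: "w \<in> oct_V n - {u}" for w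
  proof -
    have wV: "w \<in> oct_V n" and wu: "w \<noteq> u" using w by auto
    have d: "oct_dist n u w \<ge> 1" "l1 u w \<le> 2 * int (oct_dist n u w)"
      using dist_props[OF u wV] wu by auto
    obtain x y z where fw: "flip u w = (x,y,z)" by (cases "flip u w") auto
    have "flip u w \<in> oct_V n" using flip_V[OF wV] .
    then have hw: "\<bar>x\<bar> + \<bar>y\<bar> + \<bar>z\<bar> = int A + int B + int C"
      using fw nABC unfolding oct_V_def by auto
    have "l1 u w = l1 ?u' (x,y,z)" using flip_l1[of u u w] fu fw by simp
    also have "\<dots> = 2 * rho ?u' (x,y,z)" by (rule l1_rho) (use hw in auto)
    finally have lr: "l1 u w = 2 * rho ?u' (flip u w)" using fw by simp
    have "l1 u w \<ge> 0" by (cases u; cases w) simp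
    moreover have "l1 u w \<noteq> 0" using wu l1_zero[of u w] by simp
    ultimately have "l1 u w > 0" by simp
    then have r1: "rho ?u' (flip u w) \<ge> 1" using lr by linarith
    have r2: "rho ?u' (flip u w) \<le> int (oct_dist n u w)" using lr d(2) by linarith
    have "real_of_int (rho ?u' (flip u w)) \<le> real (oct_dist n u w)"
      using r2 by (metis of_int_le_iff of_int_of_nat_eq)
    moreover have "real_of_int (rho ?u' (flip u w)) \<ge> 1" using r1 by simp
    ultimately have sq: "(real_of_int (rho ?u' (flip u w)))^2 \<le> (real (oct_dist n u w))^2"
      and pos: "0 < (real (oct_dist n u w))^2 * (real_of_int (rho ?u' (flip u w)))^2"
      by (auto intro!: power_mono)
    show ?thesis by (rule divide_left_mono[OF sq _ pos]) simp
  qed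
  have "(\<Sum>w \<in> oct_V n - {u}. 1 / (real (oct_dist n u w))^2) \<le> (\<Sum>w \<in> oct_V n - {u}. ?g (flip u w))"
    by (rule sum_mono) (rule step1)
  also have "\<dots> = (\<Sum>w \<in> oct_V (A+B+C) - {?u'}. ?g w)"
  proof (rule sum.reindex_bij_witness[where i = "flip u" and j = "flip u"])
    fix w assume "w \<in> oct_V (A+B+C) - {?u'}"
    then show "flip u (flip u w) = w" by (simp add: flip_invol)
  next
    fix w assume w: "w \<in> oct_V (A+B+C) - {?u'}"
    then have "flip u w \<in> oct_V n" using flip_V nABC by auto
    moreover have "flip u w \<noteq> u"
    proof
      assume "flip u w = u"
      then have "w = flip u u" by (metis flip_invol)
      with w fu show False by simp
    qed
    ultimately show "flip u w \<in> oct_V n - {u}" by simp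
  next
    fix w assume "w \<in> oct_V n - {u}"
    then show "flip u (flip u w) = w" by (simp add: flip_invol)
  next
    fix w assume w: "w \<in> oct_V n - {u}"
    then have "flip u w \<in> oct_V (A+B+C)" using flip_V nABC by auto
    moreover have "flip u w \<noteq> ?u'"
    proof
      assume "flip u w = ?u'"
      then have "flip u w = flip u u" using fu by simp
      then have "w = u" by (metis flip_invol)
      with w show False by simp
    qed
    ultimately show "flip u w \<in> oct_V (A+B+C) - {?u'}" by simp
  next
    fix w assume "w \<in> oct_V n - {u}"
    then show "?g (flip u w) = ?g (flip u w)" by simp
  qed
  also have "\<dots> \<le> Total A B C" by (rule sum_le_Total)
  also have "\<dots> \<le> 6 + 6 * ln (2 * real (A + B + C))" using n1 nABC by (intro Total_bound) simp
  finally show ?thesis using nABC by simp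
qed


theorem lemma4:
  fixes n :: nat and u :: pt
  assumes "n \<ge> 1" and "u \<in> oct_V n"
  shows "oct_Z n u \<ge> 1 / (6 * ln (2 * exp 1 * real n))"
proof -
  let ?S = "(\<Sum>w \<in> oct_V n - {u}. 1 / (real (oct_dist n u w))^2)"
  have up: "?S \<le> 6 + 6 * ln (2 * real n)" by (rule main_sum_bound[OF assms])
  obtain a b c where uabc: "u = (a,b,c)" by (cases u) auto
  define w0 where "w0 = (-a, -b, -c)"
  have hu: "\<bar>a\<bar> + \<bar>b\<bar> + \<bar>c\<bar> = int n" using assms(2) unfolding uabc oct_V_def by simp
  have w0V: "w0 \<in> oct_V n" using hu unfolding w0_def oct_V_def by simp
  have w0u: "w0 \<noteq> u"
  proof
    assume "w0 = u"
    then have "a = 0" "b = 0" "c = 0" unfolding w0_def uabc by auto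
    with hu assms(1) show False by simp
  qed
  have d0: "oct_dist n u w0 \<ge> 1" using dist_props[OF assms(2) w0V] w0u by auto
  have fin: "finite (oct_V n - {u})" using finite_V by simp
  have "0 < 1 / (real (oct_dist n u w0))^2" using d0 by simp
  also have "\<dots> \<le> ?S"
    by (rule member_le_sum[where f = "\<lambda>w. 1 / (real (oct_dist n u w))^2"]) (use w0V w0u fin in auto)
  finally have Spos: "0 < ?S" .
  have ln_e: "ln (2 * exp 1 * real n) = 1 + ln (2 * real n)"
  proof -
    have "2 * exp 1 * real n = exp 1 * (2 * real n)" by simp
    then have "ln (2 * exp 1 * real n) = ln (exp 1) + ln (2 * real n)"
      using assms(1) by (simp add: ln_mult)
    then show ?thesis by simp
  qed
  have "1 / (6 * ln (2 * exp 1 * real n)) = 1 / (6 + 6 * ln (2 * real n))" unfolding ln_e by (simp add: algebra_simps)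
  also have "\<dots> \<le> 1 / ?S" using Spos up by (intro divide_left_mono) auto
  also have "\<dots> = oct_Z n u" unfolding oct_Z_def by (simp add: inverse_eq_divide)
  finally show ?thesis .
qed


end
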